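(* Let $\sigma$ be one of the two numbers $\sigma_+$ or $\sigma_-$ (at a given point), and put $D=1+F\sigma-G^2\sigma^2$. Then the following conditions are mutually equivalent: (a) $N^2=4MP$ (i.e. $\sigma_+=\sigma_-$, and then $\sigma=\frac{N}{2M}$); (b) $\mathcal{L}_F\mathcal{L}_{GG}=N$ and $\mathcal{L}_F\mathcal{L}_{FG}=PG$; (c) $DM=\mathcal{L}_F^2$, $DN=2\mathcal{L}_F^2\sigma$ and $DP=\mathcal{L}_F^2\sigma^2$; (d) $2D\mathcal{L}_{FF}=\mathcal{L}_F\sigma(1+F\sigma)$, $D\mathcal{L}_{GG}=2\mathcal{L}_F\sigma$ and $D\mathcal{L}_{FG}=\mathcal{L}_F G\sigma^2$.
   Context: Let $F_{ab}$ be an antisymmetric tensor (background electromagnetic field) on an oriented 4-dimensional Lorentzian manifold with metric $g_{ab}$ of signature $(-,+,+,+)$; indices are raised and lowered with $g$, $\varepsilon_{abcd}$ is the volume form and ${}^{*}F_{ab}=\frac12\varepsilon_{abcd}F^{cd}$. Its invariants are $F=\frac12F_{ab}F^{ab}$ and $G=-\frac14F_{ab}\,{}^{*}F^{ab}$. Let $\mathcal{L}(F,G)$ be a smooth Lagrangian; $\mathcal{L}_F,\mathcal{L}_G,\mathcal{L}_{FF},\mathcal{L}_{FG},\mathcal{L}_{GG}$ denote its partial derivatives evaluated at the background invariants. Define $M=\mathcal{L}_F^2+2\mathcal{L}_F\mathcal{L}_{FG}G-\frac12\mathcal{L}_F\mathcal{L}_{GG}F-PG^2$, $N=2\mathcal{L}_F\mathcal{L}_{FF}+\frac12\mathcal{L}_F\mathcal{L}_{GG}-PF$,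 $P=\mathcal{L}_{FF}\mathcal{L}_{GG}-\mathcal{L}_{FG}^2$, and $\sigma_\pm=\frac{N}{2M}\pm\sqrt{\frac{N^2}{4M^2}-\frac{P}{M}}$ (these are real). Standing assumptions: $\mathcal{L}_F\neq0$, $M\neq0$, and $1+\sigma_\pm F-\sigma_\pm^2G^2\neq0$ for both signs. *)

theory Defs
  imports Complex_Main
begin

text \<open>All quantities are evaluated at a single spacetime point. Arguments:
  LF = L_F, LFF = L_FF, LFG = L_FG, LGG = L_GG, and F, G the background invariants.\<close>

definition PP :: "real \<Rightarrow> real \<Rightarrow> real \<Rightarrow> real" where
  "PP LFF LFG LGG = LFF * LGG - LFG ^ 2"

definition MM :: "real \<Rightarrow> real \<Rightarrow> real \<Rightarrow> real \<Rightarrow> real \<Rightarrow> real \<Rightarrow> real" where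
  "MM LF LFF LFG LGG F G =
     LF ^ 2 + 2 * LF * LFG * G - (1/2) * LF * LGG * F - PP LFF LFG LGG * G ^ 2"

definition NN :: "real \<Rightarrow> real \<Rightarrow> real \<Rightarrow> real \<Rightarrow> real \<Rightarrow> real \<Rightarrow> real" where
  "NN LF LFF LFG LGG F G =
     2 * LF * LFF + (1/2) * LF * LGG - PP LFF LFG LGG * F"

definition sigma_plus :: "real \<Rightarrow> real \<Rightarrow> real \<Rightarrow> real \<Rightarrow> real \<Rightarrow> real \<Rightarrow> real" where
  "sigma_plus LF LFF LFG LGG F G =
     (let M = MM LF LFF LFG LGG F G; N = NN LF LFF LFG LGG F G; P = PP LFF LFG LGG
      in N / (2 * M) + sqrt (N ^ 2 / (4 * M ^ 2) - P / M))"

definition sigma_minus :: "real \<Rightarrow> real \<Rightarrow> real \<Rightarrow> real \<Rightarrow> real \<Rightarrow> real \<Rightarrow> real" where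
  "sigma_minus LF LFF LFG LGG F G =
     (let M = MM LF LFF LFG LGG F G; N = NN LF LFF LFG LGG F G; P = PP LFF LFG LGG
      in N / (2 * M) - sqrt (N ^ 2 / (4 * M ^ 2) - P / M))"

end

theory Submission
  imports Defs
begin

lemma disc_id:
  "(NN a x y z F G)^2 - 4 * MM a x y z F G * PP x y z
   = (a*z - NN a x y z F G)^2 + 4 * (a*y - PP x y z * G)^2"
  unfolding NN_def MM_def PP_def by (simp add: power2_eq_square algebra_simps)

lemma root_eq:
  fixes M N P s \<sigma> :: real
  assumes "M \<noteq> 0" "s^2 = N^2/(4*M^2) - P/M" "\<sigma> = N/(2*M) + s \<or> \<sigma> = N/(2*M) - s"
  shows "M*\<sigma>^2 - N*\<sigma> + P = 0"
proof -
  have "M*(N/(2*M) + s)^2 - N*(N/(2*M) + s) + P = M*(s^2 - (N^2/(4*M^2) - P/M))"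
    using assms(1) by (simp add: field_simps power2_eq_square)
  moreover have "M*(N/(2*M) - s)^2 - N*(N/(2*M) - s) + P = M*(s^2 - (N^2/(4*M^2) - P/M))"
    using assms(1) by (simp add: field_simps power2_eq_square)
  ultimately show ?thesis using assms by auto
qed

theorem proposition1:
  fixes LF LFF LFG LGG F G \<sigma> :: real
  defines "M \<equiv> MM LF LFF LFG LGG F G"
    and "N \<equiv> NN LF LFF LFG LGG F G"
    and "P \<equiv> PP LFF LFG LGG"
    and "D \<equiv> 1 + F * \<sigma> - G ^ 2 * \<sigma> ^ 2"
  assumes LF_nz: "LF \<noteq> 0"
    and M_nz: "M \<noteq> 0"
    and real_roots: "N ^ 2 / (4 * M ^ 2) - P / M \<ge> 0"
    and Dp_nz: "1 + sigma_plus LF LFF LFG LGG F G * F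
                  - (sigma_plus LF LFF LFG LGG F G) ^ 2 * G ^ 2 \<noteq> 0"
    and Dm_nz: "1 + sigma_minus LF LFF LFG LGG F G * F
                  - (sigma_minus LF LFF LFG LGG F G) ^ 2 * G ^ 2 \<noteq> 0"
    and sigma: "\<sigma> = sigma_plus LF LFF LFG LGG F G \<or> \<sigma> = sigma_minus LF LFF LFG LGG F G"
  shows "((N ^ 2 = 4 * M * P)
            \<longleftrightarrow> (LF * LGG = N \<and> LF * LFG = P * G))
       \<and> ((LF * LGG = N \<and> LF * LFG = P * G)
            \<longleftrightarrow> (D * M = LF ^ 2 \<and> D * N = 2 * LF ^ 2 * \<sigma> \<and> D * P = LF ^ 2 * \<sigma> ^ 2))
       \<and> ((D * M = LF ^ 2 \<and> D * N = 2 * LF ^ 2 * \<sigma> \<and> D * P = LF ^ 2 * \<sigma> ^ 2)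
            \<longleftrightarrow> (2 * D * LFF = LF * \<sigma> * (1 + F * \<sigma>) \<and> D * LGG = 2 * LF * \<sigma>
                 \<and> D * LFG = LF * G * \<sigma> ^ 2))"
proof -
  define s where "s = sqrt (N ^ 2 / (4 * M ^ 2) - P / M)"
  have s2: "s^2 = N ^ 2 / (4 * M ^ 2) - P / M" using real_roots s_def by simp
  have sig: "\<sigma> = N/(2*M) + s \<or> \<sigma> = N/(2*M) - s"
    using sigma unfolding sigma_plus_def sigma_minus_def Let_def s_def M_def N_def P_def by auto
  have D_nz: "D \<noteq> 0" using sigma Dp_nz Dm_nz unfolding D_def by (auto simp: algebra_simps)
  have root: "M*\<sigma>^2 - N*\<sigma> + P = 0" using root_eq[OF M_nz s2 sig] .
  have did: "N^2 - 4*M*P = (LF*LGG - N)^2 + 4*(LF*LFG - P*G)^2"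
    unfolding M_def N_def P_def by (rule disc_id)
  have ab: "(N ^ 2 = 4 * M * P) \<longleftrightarrow> (LF * LGG = N \<and> LF * LFG = P * G)"
  proof
    assume "N ^ 2 = 4 * M * P"
    then have "(LF*LGG - N)^2 + 4*(LF*LFG - P*G)^2 = 0" using did by simp
    moreover have "(LF*LGG - N)^2 \<ge> 0" "(LF*LFG - P*G)^2 \<ge> 0" by simp_all
    ultimately have "(LF*LGG - N)^2 = 0" "(LF*LFG - P*G)^2 = 0" by linarith+
    then show "LF * LGG = N \<and> LF * LFG = P * G" by simp
  next
    assume "LF * LGG = N \<and> LF * LFG = P * G"
    then show "N ^ 2 = 4 * M * P" using did by simp
  qed
  have Mdef: "M = LF^2 + 2*LF*LFG*G - (1/2)*LF*LGG*F - P*G^2"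
    unfolding M_def P_def MM_def by simp
  have Ndef: "N = 2*LF*LFF + (1/2)*LF*LGG - P*F"
    unfolding N_def P_def NN_def by simp
  have Pdef: "P = LFF*LGG - LFG^2" unfolding P_def PP_def by simp
  have Ddef: "D = 1 + F * \<sigma> - G ^ 2 * \<sigma> ^ 2" by (simp add: D_def)
  have bc: "(LF * LGG = N \<and> LF * LFG = P * G)
            \<longleftrightarrow> (D * M = LF ^ 2 \<and> D * N = 2 * LF ^ 2 * \<sigma> \<and> D * P = LF ^ 2 * \<sigma> ^ 2)"
  proof
    assume b: "LF * LGG = N \<and> LF * LFG = P * G"
    then have a: "N ^ 2 = 4 * M * P" using ab by simp
    then have "s^2 = 0" using s2 M_nz by (simp add: field_simps power2_eq_square)
    then have "s = 0" by simp
    then have sv: "\<sigma> = N/(2*M)" using sig by auto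
    have sM: "\<sigma>*M = N/2" using sv M_nz by simp
    have "(4*M)*(\<sigma>^2*M) = (2*(\<sigma>*M))^2" by (simp add: power2_eq_square algebra_simps)
    also have "\<dots> = N^2" unfolding sM by simp
    also have "\<dots> = (4*M)*P" using a by simp
    finally have s2M: "\<sigma>^2*M = P" using M_nz by simp
    have t1: "2*LF*LFG*G = 2*P*G^2" using b by (simp add: power2_eq_square)
    have t2: "(1/2)*LF*LGG*F = N*F/2" using b by simp
    have M2: "M = LF^2 + P*G^2 - N*F/2" using Mdef t1 t2 by simp
    have DM: "D*M = M + F*(\<sigma>*M) - G^2*(\<sigma>^2*M)" unfolding Ddef by (simp add: algebra_simps)
    have "D*M = M + F*(N/2) - G^2*P" using DM unfolding sM s2M .
    also have "\<dots> = LF^2" unfolding M2 by (simp add: algebra_simps)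
    finally have e1: "D*M = LF^2" .
    have e2: "D*N = 2*LF^2*\<sigma>" using e1 sM
      by (metis mult.assoc mult.commute mult_2_right field_sum_of_halves)
    have e3: "D*P = LF^2*\<sigma>^2" using e1 s2M by (metis mult.assoc mult.commute)
    show "D * M = LF ^ 2 \<and> D * N = 2 * LF ^ 2 * \<sigma> \<and> D * P = LF ^ 2 * \<sigma> ^ 2"
      using e1 e2 e3 by simp
  next
    assume c: "D * M = LF ^ 2 \<and> D * N = 2 * LF ^ 2 * \<sigma> \<and> D * P = LF ^ 2 * \<sigma> ^ 2"
    have "D^2 * (N^2 - 4*M*P) = (D*N)^2 - 4*(D*M)*(D*P)" by (simp add: algebra_simps power2_eq_square)
    also have "\<dots> = 0" using c by (simp add: algebra_simps power2_eq_square)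
    finally have "N^2 = 4*M*P" using D_nz by simp
    then show "LF * LGG = N \<and> LF * LFG = P * G" using ab by simp
  qed
  have cd: "(D * M = LF ^ 2 \<and> D * N = 2 * LF ^ 2 * \<sigma> \<and> D * P = LF ^ 2 * \<sigma> ^ 2)
            \<longleftrightarrow> (2 * D * LFF = LF * \<sigma> * (1 + F * \<sigma>) \<and> D * LGG = 2 * LF * \<sigma>
                 \<and> D * LFG = LF * G * \<sigma> ^ 2)"
  proof
    assume c: "D * M = LF ^ 2 \<and> D * N = 2 * LF ^ 2 * \<sigma> \<and> D * P = LF ^ 2 * \<sigma> ^ 2"
    then have b: "LF * LGG = N \<and> LF * LFG = P * G" using bc by simp
    have x: "2*LF*LFF = N/2 + P*F" using Ndef b by (simp add: algebra_simps)
    have "LF*(D*LGG) = LF*(2*LF*\<sigma>)" using b c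
      by (metis mult.assoc mult.commute power2_eq_square)
    then have e1: "D*LGG = 2*LF*\<sigma>" using LF_nz by simp
    have "LF*(D*LFG) = LF*(LF*G*\<sigma>^2)" using b c
      by (metis mult.assoc mult.commute power2_eq_square)
    then have e2: "D*LFG = LF*G*\<sigma>^2" using LF_nz by simp
    have "LF*(2*D*LFF) = D*N/2 + D*P*F" using x by (simp add: algebra_simps)
    also have "\<dots> = LF*(LF*\<sigma>*(1+F*\<sigma>))" using c by (simp add: algebra_simps power2_eq_square)
    finally have e3: "2*D*LFF = LF*\<sigma>*(1+F*\<sigma>)" using LF_nz by simp
    show "2 * D * LFF = LF * \<sigma> * (1 + F * \<sigma>) \<and> D * LGG = 2 * LF * \<sigma>
                 \<and> D * LFG = LF * G * \<sigma> ^ 2" using e1 e2 e3 by simp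
  next
    assume d: "2 * D * LFF = LF * \<sigma> * (1 + F * \<sigma>) \<and> D * LGG = 2 * LF * \<sigma>
                 \<and> D * LFG = LF * G * \<sigma> ^ 2"
    have a1: "D*LFF = LF*\<sigma>*(1+F*\<sigma>)/2" using d by simp
    have a2: "D*LGG = 2*LF*\<sigma>" using d by simp
    have a3: "D*LFG = LF*G*\<sigma>^2" using d by simp
    have "D*(D*P) = (D*LFF)*(D*LGG) - (D*LFG)^2" unfolding Pdef by (simp add: algebra_simps power2_eq_square)
    also have "\<dots> = D*(LF^2*\<sigma>^2)" unfolding a1 a2 a3 unfolding Ddef by (simp add: algebra_simps power2_eq_square)
    finally have e3: "D*P = LF^2*\<sigma>^2" using D_nz by simp
    have "D*N = 2*LF*(D*LFF) + (1/2)*LF*(D*LGG) - (D*P)*F" unfolding Ndef by (simp add: algebra_simps)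
    also have "\<dots> = 2*LF^2*\<sigma>" unfolding a1 a2 e3 by (simp add: algebra_simps power2_eq_square)
    finally have e2: "D*N = 2*LF^2*\<sigma>" .
    have "D*M = D*LF^2 + 2*LF*G*(D*LFG) - (1/2)*LF*F*(D*LGG) - G^2*(D*P)" unfolding Mdef by (simp add: algebra_simps)
    also have "\<dots> = LF^2" unfolding a3 a2 e3 unfolding Ddef by (simp add: algebra_simps power2_eq_square)
    finally have e1: "D*M = LF^2" .
    show "D * M = LF ^ 2 \<and> D * N = 2 * LF ^ 2 * \<sigma> \<and> D * P = LF ^ 2 * \<sigma> ^ 2" using e1 e2 e3 by simp
  qed
  show ?thesis using ab bc cd by blast
qed

end
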